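(* Let $n\ge 2$. Among all simple directed graphs with $n$ vertices and $n-1$ arcs, the maximal algebraic connectivity is $1$, and a simple directed graph with $n$ vertices and $n-1$ arcs has algebraic connectivity $1$ if and only if it is a directed tree.
   Context: A simple directed graph has no self-arcs and no repeated arcs; an arc $(j,i)$ goes from $j$ to $i$. The (in-degree) Laplacian of a directed graph $\mathbb G$ on vertices $\{1,\dots,n\}$ is $L(\mathbb G)=D-A$, where $D$ is the diagonal matrix of in-degrees and $A_{ij}=1$ if $(j,i)$ is an arc and $0$ otherwise. Its eigenvalues, counted with algebraic multiplicity, have real parts $0={\rm Re}(\lambda_1)\le {\rm Re}(\lambda_2)\le\cdots\le{\rm Re}(\lambda_n)$; the algebraic connectivity is $a(\mathbb G)={\rm Re}(\lambda_2)$, the second smallest real part. A vertex $r$ is a root if there is a directed path from $r$ to every other vertex; a graph is rooted if it has a root. An $n$-vertex directed tree is a rooted directed graph with $n$ vertices and $n-1$ arcs. *)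

theory Defs
  imports "Jordan_Normal_Form.Char_Poly" "HOL-Computational_Algebra.Polynomial" "HOL-Library.Multiset"
begin

text \<open>Vertices are 0..n-1 (a relabelling of 1..n). A directed graph is given by its arc set
  A of pairs (j,i), meaning an arc from j to i. Being a set, A has no repeated arcs.\<close>

definition simple_digraph :: "nat \<Rightarrow> (nat \<times> nat) set \<Rightarrow> bool" where
  "simple_digraph n A \<longleftrightarrow> A \<subseteq> {0..<n} \<times> {0..<n} \<and> (\<forall>v. (v, v) \<notin> A)"

definition in_degree :: "(nat \<times> nat) set \<Rightarrow> nat \<Rightarrow> nat" where
  "in_degree A i = card {j. (j, i) \<in> A}"

definition laplacian :: "nat \<Rightarrow> (nat \<times> nat) set \<Rightarrow> complex mat" where
  "laplacian n A = mat n n (\<lambda>(i, j).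
      (if i = j then of_nat (in_degree A i) else 0) - (if (j, i) \<in> A then 1 else 0))"

definition lap_eigenvalues :: "nat \<Rightarrow> (nat \<times> nat) set \<Rightarrow> complex multiset" where
  "lap_eigenvalues n A = proots (char_poly (laplacian n A))"

definition alg_conn :: "nat \<Rightarrow> (nat \<times> nat) set \<Rightarrow> real" where
  "alg_conn n A = sorted_list_of_multiset (image_mset Re (lap_eigenvalues n A)) ! 1"

definition is_root :: "nat \<Rightarrow> (nat \<times> nat) set \<Rightarrow> nat \<Rightarrow> bool" where
  "is_root n A r \<longleftrightarrow> r < n \<and> (\<forall>v < n. (r, v) \<in> A\<^sup>*)"

definition rooted :: "nat \<Rightarrow> (nat \<times> nat) set \<Rightarrow> bool" where
  "rooted n A \<longleftrightarrow> (\<exists>r. is_root n A r)"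

definition directed_tree :: "nat \<Rightarrow> (nat \<times> nat) set \<Rightarrow> bool" where
  "directed_tree n A \<longleftrightarrow> simple_digraph n A \<and> rooted n A \<and> card A = n - 1"

end

theory Submission
  imports Defs "Jordan_Normal_Form.Schur_Decomposition"
begin

lemma trace_comm:
  fixes X Y :: "'a::comm_ring_1 mat"
  assumes X: "X \<in> carrier_mat n k" and Y: "Y \<in> carrier_mat k n"
  shows "(\<Sum>i<n. (X * Y) $$ (i,i)) = (\<Sum>j<k. (Y * X) $$ (j,j))"
proof -
  have "(\<Sum>i<n. (X * Y) $$ (i,i)) = (\<Sum>i<n. \<Sum>j<k. X $$ (i,j) * Y $$ (j,i))"
    using X Y by (auto simp: scalar_prod_def intro!: sum.cong atLeast0LessThan)
  also have "\<dots> = (\<Sum>j<k. \<Sum>i<n. Y $$ (j,i) * X $$ (i,j))"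
    by (subst sum.swap) (simp add: mult.commute)
  also have "\<dots> = (\<Sum>j<k. (Y * X) $$ (j,j))"
    using X Y by (auto simp: scalar_prod_def intro!: sum.cong atLeast0LessThan)
  finally show ?thesis .
qed

lemma char_poly_trace:
  fixes A :: "complex mat"
  assumes A: "A \<in> carrier_mat n n"
  shows "\<exists>es. char_poly A = (\<Prod>e\<leftarrow>es. [:- e, 1:]) \<and> length es = n \<and> sum_list es = (\<Sum>i<n. A $$ (i,i))"
proof -
  obtain es where es: "char_poly A = (\<Prod>e\<leftarrow>es. [:- e, 1:])" "length es = n"
    using char_poly_factorized[OF A] by blast
  obtain B P Q where sd: "schur_decomposition A es = (B,P,Q)"
    by (cases "schur_decomposition A es") auto
  from schur_decomposition[OF A es(1) sd] have
    sim: "similar_mat_wit A B P Q" and diag: "diag_mat B = es" by auto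
  from sim A have P: "P \<in> carrier_mat n n" and B: "B \<in> carrier_mat n n" and Q: "Q \<in> carrier_mat n n"
    and QP: "Q * P = 1\<^sub>m n" and AE: "A = P * B * Q"
    unfolding similar_mat_wit_def Let_def by auto
  have "(\<Sum>i<n. A $$ (i,i)) = (\<Sum>i<n. (P * (B * Q)) $$ (i,i))"
    using AE P B Q by (simp add: assoc_mult_mat)
  also have "\<dots> = (\<Sum>i<n. ((B * Q) * P) $$ (i,i))"
    by (rule trace_comm[OF P], insert B Q, auto)
  also have "(B * Q) * P = B"
    using B Q P QP by (simp add: assoc_mult_mat)
  also have "(\<Sum>i<n. B $$ (i,i)) = sum_list (diag_mat B)"
    using B by (simp add: diag_mat_def sum_list_sum_nth atLeast0LessThan)
  finally show ?thesis using es diag by auto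
qed

lemma lap_carrier[simp]: "laplacian n A \<in> carrier_mat n n"
  by (simp add: laplacian_def)

lemma lap_entry: "i < n \<Longrightarrow> j < n \<Longrightarrow> laplacian n A $$ (i,j) =
   (if i = j then of_nat (in_degree A i) else 0) - (if (j, i) \<in> A then 1 else 0)"
  by (simp add: laplacian_def)

lemma innb_sub: "simple_digraph n A \<Longrightarrow> {j. (j,i) \<in> A} \<subseteq> {0..<n}"
  by (auto simp: simple_digraph_def)

lemma innb_fin: "simple_digraph n A \<Longrightarrow> finite {j. (j,i) \<in> A}"
  by (rule finite_subset[OF innb_sub]) auto

lemma lap_dims[simp]: "dim_row (laplacian n A) = n" "dim_col (laplacian n A) = n"
  by (simp_all add: laplacian_def)

lemma lap_mulv:
  assumes s: "simple_digraph n A" and i: "i < n" and v: "v \<in> carrier_vec n"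
  shows "(laplacian n A *\<^sub>v v) $ i = of_nat (in_degree A i) * v $ i - (\<Sum>j\<in>{j. (j,i) \<in> A}. v $ j)"
proof -
  have "(laplacian n A *\<^sub>v v) $ i = (\<Sum>j\<in>{0..<n}. laplacian n A $$ (i,j) * v $ j)"
    using i v by (simp add: scalar_prod_def)
  also have "\<dots> = (\<Sum>j\<in>{0..<n}. (if i = j then of_nat (in_degree A i) * v $ j else 0)
      - (if (j, i) \<in> A then v $ j else 0))"
    using i by (intro sum.cong refl) (simp add: lap_entry left_diff_distrib)
  also have "\<dots> = of_nat (in_degree A i) * v $ i - (\<Sum>j\<in>{0..<n}. if (j, i) \<in> A then v $ j else 0)"
    using i by (simp add: sum_subtractf)
  also have "(\<Sum>j\<in>{0..<n}. if (j, i) \<in> A then v $ j else 0) = (\<Sum>j\<in>{j. (j,i) \<in> A}. v $ j)"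
  proof -
    have "{j \<in> {0..<n}. (j,i) \<in> A} = {j. (j,i) \<in> A}" using innb_sub[OF s, of i] by auto
    thus ?thesis using sum.inter_filter[of "{0..<n}" "\<lambda>j. v $ j" "\<lambda>j. (j,i) \<in> A"] by simp
  qed
  finally show ?thesis .
qed

lemma rowsum0:
  assumes s: "simple_digraph n A" and i: "i < n"
  shows "(\<Sum>j\<in>{0..<n}. laplacian n A $$ (i,j)) = 0"
proof -
  have "(\<Sum>j\<in>{0..<n}. laplacian n A $$ (i,j)) = (laplacian n A *\<^sub>v vec n (\<lambda>_. 1)) $ i"
    using i by (simp add: scalar_prod_def)
  also have "\<dots> = of_nat (in_degree A i) - (\<Sum>j\<in>{j. (j,i) \<in> A}. 1)"
  proof -
    have "(\<Sum>j\<in>{j. (j,i) \<in> A}. vec n (\<lambda>_. 1) $ j) = (\<Sum>j\<in>{j. (j,i) \<in> A}. (1::complex))"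
      using innb_sub[OF s, of i] by (intro sum.cong) auto
    thus ?thesis using i by (subst lap_mulv[OF s i]) auto
  qed
  also have "\<dots> = 0" by (simp add: in_degree_def)
  finally show ?thesis .
qed

lemma eig_Re_nonneg:
  assumes s: "simple_digraph n A" and r: "poly (char_poly (laplacian n A)) l = 0"
  shows "Re l \<ge> 0"
proof -
  let ?L = "laplacian n A"
  have "eigenvalue ?L l" using eigenvalue_root_char_poly[OF lap_carrier] r by auto
  then obtain v where v: "v \<in> carrier_vec n" "v \<noteq> 0\<^sub>v n" "?L *\<^sub>v v = l \<cdot>\<^sub>v v"
    unfolding eigenvalue_def eigenvector_def by auto
  have n: "n > 0"
  proof (rule ccontr)
    assume "\<not> n > 0"
    hence "v = 0\<^sub>v n" using v(1) by (intro eq_vecI) auto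
    thus False using v(2) by simp
  qed
  obtain i where i: "i < n" and mx: "\<And>j. j < n \<Longrightarrow> cmod (v $ j) \<le> cmod (v $ i)"
  proof -
    let ?M = "Max ((\<lambda>j. cmod (v $ j)) ` {0..<n})"
    have "?M \<in> (\<lambda>j. cmod (v $ j)) ` {0..<n}" using n by (intro Max_in) auto
    then obtain i where i: "i < n" "cmod (v $ i) = ?M" by auto
    have "\<And>j. j < n \<Longrightarrow> cmod (v $ j) \<le> ?M" by (intro Max_ge) auto
    thus ?thesis using that i by metis
  qed
  have vi: "v $ i \<noteq> 0"
  proof
    assume "v $ i = 0"
    hence "v = 0\<^sub>v n" using mx v(1) by (intro eq_vecI) auto
    thus False using v(2) by simp
  qed
  let ?N = "{j. (j,i) \<in> A}"
  let ?d = "of_nat (in_degree A i) :: complex"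
  have "l * v $ i = ?d * v $ i - (\<Sum>j\<in>?N. v $ j)"
  proof -
    have "(?L *\<^sub>v v) $ i = (l \<cdot>\<^sub>v v) $ i" using v(3) by simp
    also have "\<dots> = l * v $ i" using i v(1) by simp
    finally show ?thesis using lap_mulv[OF s i v(1)] by simp
  qed
  hence eq: "(?d - l) * v $ i = (\<Sum>j\<in>?N. v $ j)" by (simp add: algebra_simps)
  have "cmod (?d - l) * cmod (v $ i) = cmod (\<Sum>j\<in>?N. v $ j)" using eq norm_mult by metis
  also have "\<dots> \<le> (\<Sum>j\<in>?N. cmod (v $ j))" by (rule norm_sum)
  also have "\<dots> \<le> (\<Sum>j\<in>?N. cmod (v $ i))"
    using innb_sub[OF s, of i] mx by (intro sum_mono) auto
  also have "\<dots> = real (in_degree A i) * cmod (v $ i)" by (simp add: in_degree_def)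
  finally have "cmod (?d - l) \<le> real (in_degree A i)" using vi by simp
  moreover have "Re (?d - l) \<le> cmod (?d - l)" by (rule complex_Re_le_cmod)
  ultimately show ?thesis by simp
qed

lemma sum_indeg:
  assumes s: "simple_digraph n A"
  shows "(\<Sum>i<n. in_degree A i) = card A"
proof -
  have "A = (\<lambda>(i,j). (j,i)) ` (SIGMA i:{..<n}. {j. (j,i) \<in> A})"
    using s by (force simp: simple_digraph_def)
  moreover have "inj_on (\<lambda>(i,j). (j,i)) (SIGMA i:{..<n}. {j. (j,i) \<in> A})"
    by (auto simp: inj_on_def)
  ultimately have "card A = card (SIGMA i:{..<n}. {j. (j,i) \<in> A})"
    by (metis card_image)
  also have "\<dots> = (\<Sum>i<n. card {j. (j,i) \<in> A})"
    using innb_fin[OF s] by (simp add: card_SigmaI)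
  finally show ?thesis by (simp add: in_degree_def)
qed


lemma sum_list_ge: "(\<forall>x\<in>set xs. c \<le> x) \<Longrightarrow> real (length xs) * c \<le> sum_list (xs :: real list)"
  by (induction xs) (auto simp: algebra_simps)

lemma sum_list_le: "(\<forall>x\<in>set xs. x \<le> c) \<Longrightarrow> sum_list (xs :: real list) \<le> real (length xs) * c"
  by (induction xs) (auto simp: algebra_simps)

lemma sorted_cons2:
  assumes "length (xs :: real list) \<ge> 2"
  obtains a b rest where "sort xs = a # b # rest" "a \<le> b" "\<forall>x\<in>set rest. b \<le> x"
    "length rest = length xs - 2" "a + b + sum_list rest = sum_list xs"
    "mset (a # b # rest) = mset xs"
proof -
  have "length (sort xs) \<ge> 2" using assms by simp
  then obtain a b rest where e: "sort xs = a # b # rest"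
    by (metis One_nat_def Suc_1 Suc_le_length_iff le_SucE numeral_2_eq_2)
  have srt: "sorted (a # b # rest)" using e[symmetric] by simp
  have "sum_list (sort xs) = sum_list xs" by (metis mset_sort sum_mset_sum_list)
  moreover have "length (sort xs) = length xs" by simp
  moreover have "mset (sort xs) = mset xs" by simp
  ultimately show ?thesis using that[of a b rest] e srt by (simp add: add.assoc del: mset_sort)
qed

lemma list_le1:
  assumes len: "length xs = n" "n \<ge> 2" and nn: "\<forall>x\<in>set xs. (0::real) \<le> x"
    and sm: "sum_list xs = real n - 1"
  shows "sort xs ! 1 \<le> 1"
proof -
  obtain a b rest where e: "sort xs = a # b # rest" "a \<le> b" "\<forall>x\<in>set rest. b \<le> x"
    "length rest = length xs - 2" "a + b + sum_list rest = sum_list xs" "mset (a # b # rest) = mset xs"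
    using sorted_cons2 len by metis
  have "a \<in> set xs" using e(6) by (metis list.set_intros(1) set_mset_mset)
  hence a: "a \<ge> 0" using nn by auto
  have lr: "real (length rest) = real n - 2" using e(4) len by simp
  have "real (length rest) * b \<le> sum_list rest" using sum_list_ge e(3) by blast
  hence "(real n - 2) * b \<le> sum_list rest" using lr by simp
  moreover have "(real n - 1) * b = (real n - 2) * b + b" by (simp add: algebra_simps)
  ultimately have "(real n - 1) * b \<le> real n - 1" using a e(5) sm by linarith
  hence "b \<le> 1" using len by (simp add: mult_le_cancel_right2 mult.commute)
  thus ?thesis using e by simp
qed

lemma list_eq1:
  assumes len: "length xs = n" "n \<ge> 2" and nn: "\<forall>x\<in>set xs. x = (0::real) \<or> x = 1"
    and sm: "sum_list xs = real n - 1"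
  shows "sort xs ! 1 = 1"
proof -
  obtain a b rest where e: "sort xs = a # b # rest" "a \<le> b" "\<forall>x\<in>set rest. b \<le> x"
    "length rest = length xs - 2" "a + b + sum_list rest = sum_list xs" "mset (a # b # rest) = mset xs"
    using sorted_cons2 len by metis
  have "set (a # b # rest) = set xs" using e(6) by (metis set_mset_mset)
  hence sub: "a \<in> set xs" "b \<in> set xs" "set rest \<subseteq> set xs" by auto
  hence ab: "a = 0 \<or> a = 1" "b = 0 \<or> b = 1" using nn by auto
  have ab3: "\<forall>x\<in>set rest. x \<le> 1" using sub(3) nn by fastforce
  have "sum_list rest \<le> real (length rest) * 1" using sum_list_le ab3 by blast
  moreover have "real (length rest) = real n - 2" using e(4) len by simp
  ultimately have "b \<noteq> 0" using ab e(2,5) sm by auto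
  thus ?thesis using ab e by simp
qed

lemma list_zero2:
  assumes nn: "\<forall>x\<in>set xs. (0::real) \<le> x" and c: "count (mset xs) 0 \<ge> 2"
  shows "sort xs ! 1 = 0"
proof -
  have "length xs \<ge> 2" using c by (metis count_le_size le_trans size_mset)
  then obtain a b rest where e: "sort xs = a # b # rest" "a \<le> b" "\<forall>x\<in>set rest. b \<le> x"
    "mset (a # b # rest) = mset xs"
    using sorted_cons2 by metis
  have "set (a # b # rest) = set xs" using e(4) by (metis set_mset_mset)
  hence a: "a \<ge> 0" using nn by auto
  show ?thesis
  proof (rule ccontr)
    assume "sort xs ! 1 \<noteq> 0"
    hence "b \<noteq> 0" using e by simp
    hence b: "b > 0" using a e(2) by simp
    have "0 \<notin> set rest" using e(3) b by auto
    hence c0: "count (mset rest) 0 = 0" by (simp add: count_eq_zero_iff)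
    have "count (mset (a # b # rest)) 0 \<le> 1" using b by (cases "a = 0") (simp_all add: c0)
    thus False using c e(4) by (metis le_trans numeral_le_one_iff semiring_norm(69))
  qed
qed


lemma mset_singletons: "(\<Sum>e\<leftarrow>es. {#e#}) = mset es"
  by (induction es) auto

lemma proots_lin: "proots (\<Prod>e\<leftarrow>es. [:- e, 1:]) = mset (es :: complex list)"
proof -
  have "proots (\<Prod>p\<leftarrow>map (\<lambda>e. [:- e, 1:]) es. p) = (\<Sum>p\<leftarrow>map (\<lambda>e. [:- e, 1:]) es. proots p)"
    by (rule proots_prod_list) auto
  also have "\<dots> = (\<Sum>e\<leftarrow>es. {#e#})" by (simp add: comp_def)
  finally show ?thesis by (simp add: mset_singletons comp_def)
qed

lemma alg_conn_repr:
  assumes s: "simple_digraph n A"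
  obtains es where "char_poly (laplacian n A) = (\<Prod>e\<leftarrow>es. [:- e, 1:])" "length es = n"
    "sum_list es = of_nat (card A)" "alg_conn n A = sort (map Re es) ! 1"
    "\<forall>e\<in>set es. Re e \<ge> 0" "mset es = proots (char_poly (laplacian n A))"
proof -
  obtain es where es: "char_poly (laplacian n A) = (\<Prod>e\<leftarrow>es. [:- e, 1:])" "length es = n"
     "sum_list es = (\<Sum>i<n. laplacian n A $$ (i,i))"
    using char_poly_trace[OF lap_carrier] by blast
  have "(\<Sum>i<n. laplacian n A $$ (i,i)) = (\<Sum>i<n. of_nat (in_degree A i))"
    using s by (intro sum.cong refl) (auto simp: lap_entry simple_digraph_def)
  also have "\<dots> = of_nat (card A)" using sum_indeg[OF s] by (metis of_nat_sum)
  finally have tr: "sum_list es = of_nat (card A)" using es(3) by simp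
  have pr: "mset es = proots (char_poly (laplacian n A))" using es(1) proots_lin by simp
  have ac: "alg_conn n A = sort (map Re es) ! 1"
    unfolding alg_conn_def lap_eigenvalues_def pr[symmetric] by (metis mset_map sorted_list_of_multiset_mset)
  have nn: "\<forall>e\<in>set es. Re e \<ge> 0"
  proof
    fix e assume e: "e \<in> set es"
    have "poly (char_poly (laplacian n A)) e = 0"
      unfolding es(1) poly_prod_list using e by (simp add: prod_list_zero_iff)
    thus "Re e \<ge> 0" by (rule eig_Re_nonneg[OF s])
  qed
  show ?thesis using that es(1,2) tr ac nn pr by blast
qed


lemma det_perm_both:
  fixes B :: "'a :: comm_ring_1 mat"
  assumes B: "B \<in> carrier_mat n n" and p: "p permutes {0..<n}"
  shows "det (mat n n (\<lambda>(i,j). B $$ (p i, p j))) = det B"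
proof -
  have pn: "\<And>i. i < n \<Longrightarrow> p i < n" using p by (meson atLeastLessThan_iff permutes_in_image zero_le)
  define C where "C = mat n n (\<lambda>(i,j). B $$ (p i, j))"
  have C: "C \<in> carrier_mat n n" by (simp add: C_def)
  have dC: "det C = signof p * det B" unfolding C_def by (rule det_permute_rows[OF B p])
  define D where "D = mat n n (\<lambda>(i,j). transpose_mat C $$ (p i, j))"
  have dD: "det D = signof p * det (transpose_mat C)" unfolding D_def
    by (rule det_permute_rows[OF _ p]) (simp add: C)
  have DE: "transpose_mat D = mat n n (\<lambda>(i,j). B $$ (p i, p j))"
    by (rule eq_matI) (auto simp: D_def C_def pn)
  have "det (mat n n (\<lambda>(i,j). B $$ (p i, p j))) = det D"
    unfolding DE[symmetric] by (rule det_transpose[of _ n]) (simp add: D_def)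
  also have "\<dots> = signof p * signof p * det B" using dD dC det_transpose[OF C] by simp
  also have "signof p * signof p = (1::'a)"
  proof -
    have "signof p = (1::'a) \<or> signof p = (- 1::'a)" using signof_pm_one[of p] by auto
    thus ?thesis by (metis mult_1 mult_minus1 minus_minus)
  qed
  finally show ?thesis by simp
qed

lemma cp_perm:
  fixes A :: "complex mat"
  assumes A: "A \<in> carrier_mat n n" and p: "p permutes {0..<n}"
  shows "char_poly (mat n n (\<lambda>(i,j). A $$ (p i, p j))) = char_poly A"
proof -
  have pn: "\<And>i. i < n \<Longrightarrow> p i < n" using p by (meson atLeastLessThan_iff permutes_in_image zero_le)
  have pinj: "\<And>i j. i < n \<Longrightarrow> j < n \<Longrightarrow> p i = p j \<longleftrightarrow> i = j"
    using p by (metis permutes_inj injD)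
  have "char_poly_matrix (mat n n (\<lambda>(i,j). A $$ (p i, p j))) =
      mat n n (\<lambda>(i,j). char_poly_matrix A $$ (p i, p j))"
    by (rule eq_matI) (use A pn pinj in \<open>auto simp: char_poly_matrix_def\<close>)
  thus ?thesis unfolding char_poly_def using det_perm_both[OF _ p, of "char_poly_matrix A"] A by simp
qed

lemma cp_block:
  fixes A :: "complex mat"
  assumes A: "A \<in> carrier_mat n n" and m: "m \<le> n"
    and z: "\<And>i j. i < m \<Longrightarrow> m \<le> j \<Longrightarrow> j < n \<Longrightarrow> A $$ (i,j) = 0"
  shows "char_poly A = char_poly (mat m m (\<lambda>(i,j). A $$ (i,j))) *
     char_poly (mat (n-m) (n-m) (\<lambda>(i,j). A $$ (m+i, m+j)))"
proof -
  let ?A1 = "mat m m (\<lambda>(i,j). A $$ (i,j))"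
  let ?A4 = "mat (n-m) (n-m) (\<lambda>(i,j). A $$ (m+i, m+j))"
  let ?C = "mat (n-m) m (\<lambda>(i,j). [:- A $$ (m+i, j):])"
  have "char_poly_matrix A = four_block_mat (char_poly_matrix ?A1) (0\<^sub>m m (n-m)) ?C (char_poly_matrix ?A4)"
    by (rule eq_matI) (use A m z in \<open>auto simp: char_poly_matrix_def\<close>)
  hence "char_poly A = det (four_block_mat (char_poly_matrix ?A1) (0\<^sub>m m (n-m)) ?C (char_poly_matrix ?A4))"
    unfolding char_poly_def by simp
  also have "\<dots> = det (char_poly_matrix ?A1) * det (char_poly_matrix ?A4)"
    by (rule det_four_block_mat_upper_right_zero) auto
  finally show ?thesis unfolding char_poly_def .
qed


lemma perm_for_set:
  assumes S: "S \<subseteq> {0..<n}"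
  obtains p where "p permutes {0..<n}" "bij_betw p {0..<card S} S"
    "\<And>i. card S \<le> i \<Longrightarrow> i < n \<Longrightarrow> p i \<notin> S" "card S \<le> n"
proof -
  define m where "m = card S"
  define T where "T = {0..<n} - S"
  have fS: "finite S" using S finite_subset by blast
  have mn: "m \<le> n" unfolding m_def using card_mono[OF _ S] by simp
  have cT: "card T = n - m" unfolding T_def m_def using S by (simp add: card_Diff_subset fS)
  obtain f where f: "bij_betw f {0..<m} S" using ex_bij_betw_nat_finite[OF fS] m_def by blast
  obtain g where g: "bij_betw g {0..<n-m} T"
    using ex_bij_betw_nat_finite[of T] cT unfolding T_def by auto
  define p where "p i = (if i < m then f i else if i < n then g (i - m) else i)" for i
  have b1: "bij_betw p {0..<m} S"
    using f by (rule bij_betw_cong[THEN iffD1, rotated]) (simp add: p_def)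
  have sh: "bij_betw (\<lambda>i. i - m) {m..<n} {0..<n-m}"
    by (rule bij_betw_byWitness[where f'="\<lambda>i. i + m"]) auto
  have b2: "bij_betw p {m..<n} T"
  proof -
    have "bij_betw (g \<circ> (\<lambda>i. i - m)) {m..<n} T" using bij_betw_trans[OF sh g] .
    thus ?thesis by (rule bij_betw_cong[THEN iffD1, rotated]) (simp add: p_def)
  qed
  have "bij_betw p ({0..<m} \<union> {m..<n}) (S \<union> T)"
    by (rule bij_betw_combine[OF b1 b2]) (auto simp: T_def)
  moreover have "{0..<m} \<union> {m..<n} = {0..<n}" using mn by auto
  moreover have "S \<union> T = {0..<n}" using S by (auto simp: T_def)
  ultimately have "bij_betw p {0..<n} {0..<n}" by simp
  hence "p permutes {0..<n}" by (rule bij_imp_permutes) (use mn in \<open>simp add: p_def\<close>)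
  moreover have "\<And>i. m \<le> i \<Longrightarrow> i < n \<Longrightarrow> p i \<notin> S"
    using b2 by (auto simp: T_def bij_betw_def)
  ultimately show ?thesis using that b1 mn unfolding m_def by blast
qed

lemma zero_root_sub:
  assumes s: "simple_digraph n A" and Ssub: "S \<subseteq> {0..<n}"
    and cl: "\<And>j i. (j,i) \<in> A \<Longrightarrow> i \<in> S \<Longrightarrow> j \<in> S"
    and f: "bij_betw f {0..<k} S" and k: "k > 0"
  shows "poly (char_poly (mat k k (\<lambda>(i,j). laplacian n A $$ (f i, f j)))) 0 = 0"
proof -
  let ?L = "laplacian n A"
  let ?M = "mat k k (\<lambda>(i,j). ?L $$ (f i, f j))"
  let ?one = "vec k (\<lambda>_. 1 :: complex)"
  have fS: "\<And>i. i < k \<Longrightarrow> f i \<in> S" using f by (auto simp: bij_betw_def)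
  have "?M *\<^sub>v ?one = 0 \<cdot>\<^sub>v ?one"
  proof (rule eq_vecI)
    fix i assume "i < dim_vec (0 \<cdot>\<^sub>v ?one)"
    hence i: "i < k" by simp
    have fi: "f i \<in> S" "f i < n" using fS[OF i] Ssub by auto
    have "(?M *\<^sub>v ?one) $ i = (\<Sum>j\<in>{0..<k}. ?L $$ (f i, f j))"
      using i by (simp add: scalar_prod_def)
    also have "\<dots> = (\<Sum>l\<in>S. ?L $$ (f i, l))"
      by (rule sum.reindex_bij_betw[OF f])
    also have "\<dots> = (\<Sum>l\<in>{0..<n}. ?L $$ (f i, l))"
    proof (rule sum.mono_neutral_left[OF _ Ssub])
      show "\<forall>l\<in>{0..<n} - S. ?L $$ (f i, l) = 0"
        using fi cl by (auto simp: lap_entry)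
    qed simp
    also have "\<dots> = 0" by (rule rowsum0[OF s fi(2)])
    finally show "(?M *\<^sub>v ?one) $ i = (0 \<cdot>\<^sub>v ?one) $ i" using i by simp
  qed auto
  moreover have "?one \<noteq> 0\<^sub>v k"
  proof
    assume "?one = 0\<^sub>v k"
    hence "?one $ 0 = 0\<^sub>v k $ 0" by simp
    thus False using k by simp
  qed
  moreover have "?one \<in> carrier_vec k" by simp
  ultimately have "eigenvector ?M ?one 0" unfolding eigenvector_def by simp
  hence "eigenvalue ?M 0" unfolding eigenvalue_def by blast
  thus ?thesis using eigenvalue_root_char_poly[of ?M k] by simp
qed


lemma two_closed:
  assumes s: "simple_digraph n A" and n: "n > 0" and nr: "\<not> rooted n A"
  obtains S1 S2 where "S1 \<subseteq> {0..<n}" "S2 \<subseteq> {0..<n}" "S1 \<noteq> {}" "S2 \<noteq> {}" "S1 \<inter> S2 = {}"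
    "\<And>j i. (j,i) \<in> A \<Longrightarrow> i \<in> S1 \<Longrightarrow> j \<in> S1"
    "\<And>j i. (j,i) \<in> A \<Longrightarrow> i \<in> S2 \<Longrightarrow> j \<in> S2"
proof -
  define R where "R v = {w. w < n \<and> (v,w) \<in> A\<^sup>*}" for v
  have Rfin: "finite (R v)" for v unfolding R_def by simp
  have An: "\<And>j i. (j,i) \<in> A \<Longrightarrow> j < n \<and> i < n" using s by (auto simp: simple_digraph_def)
  let ?M = "Max ((\<lambda>v. card (R v)) ` {0..<n})"
  have "?M \<in> (\<lambda>v. card (R v)) ` {0..<n}" using n by (intro Max_in) auto
  then obtain v where v: "v < n" "card (R v) = ?M" by auto
  have mx: "\<And>u. u < n \<Longrightarrow> card (R u) \<le> card (R v)" using v(2) by (auto intro: Max_ge)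
  define S1 where "S1 = {u. u < n \<and> (u,v) \<in> A\<^sup>*}"
  define S2 where "S2 = {0..<n} - R v"
  have "\<not> is_root n A v" using nr unfolding rooted_def by blast
  then obtain w where w: "w < n" "(v,w) \<notin> A\<^sup>*" using v(1) unfolding is_root_def by auto
  have c1: "j \<in> S1" if "(j,i) \<in> A" "i \<in> S1" for j i
    using that An unfolding S1_def by (auto intro: converse_rtrancl_into_rtrancl)
  have c2: "j \<in> S2" if "(j,i) \<in> A" "i \<in> S2" for j i
    using that An unfolding S2_def R_def by (auto intro: rtrancl_into_rtrancl)
  have dj: "S1 \<inter> S2 = {}"
  proof (rule ccontr)
    assume "S1 \<inter> S2 \<noteq> {}"
    then obtain u where u: "u < n" "(u,v) \<in> A\<^sup>*" "(v,u) \<notin> A\<^sup>*"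
      unfolding S1_def S2_def R_def by auto
    have "R v \<subseteq> R u" unfolding R_def using u(2) by (auto intro: rtrancl_trans)
    moreover have "u \<in> R u - R v" using u unfolding R_def by auto
    ultimately have "R v \<subset> R u" by blast
    hence "card (R v) < card (R u)" by (rule psubset_card_mono[OF Rfin])
    thus False using mx[OF u(1)] by simp
  qed
  show ?thesis
  proof (rule that[of S1 S2])
    show "S1 \<noteq> {}" using v(1) unfolding S1_def by auto
    show "S2 \<noteq> {}" using w unfolding S2_def R_def by auto
  qed (use c1 c2 dj in \<open>auto simp: S1_def S2_def\<close>)
qed


lemma lap_zero:
  assumes "\<And>j i. (j,i) \<in> A \<Longrightarrow> i \<in> S \<Longrightarrow> j \<in> S" "k \<in> S" "l \<notin> S" "k < n" "l < n"
  shows "laplacian n A $$ (k,l) = 0"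
  using assms by (auto simp: lap_entry)

lemma nonrooted_double:
  assumes s: "simple_digraph n A" and n: "n > 0" and nr: "\<not> rooted n A"
  shows "[:0,1:] * [:0,1:] dvd char_poly (laplacian n A)"
proof -
  let ?L = "laplacian n A"
  obtain S1 S2 where S: "S1 \<subseteq> {0..<n}" "S2 \<subseteq> {0..<n}" "S1 \<noteq> {}" "S2 \<noteq> {}" "S1 \<inter> S2 = {}"
    and c1: "\<And>j i. (j,i) \<in> A \<Longrightarrow> i \<in> S1 \<Longrightarrow> j \<in> S1"
    and c2: "\<And>j i. (j,i) \<in> A \<Longrightarrow> i \<in> S2 \<Longrightarrow> j \<in> S2"
    by (rule two_closed[OF s n nr]) blast+
  define m where "m = card S1"
  obtain p where p: "p permutes {0..<n}" "bij_betw p {0..<m} S1"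
    "\<And>i. m \<le> i \<Longrightarrow> i < n \<Longrightarrow> p i \<notin> S1" "m \<le> n"
    by (rule perm_for_set[OF S(1), folded m_def]) blast+
  have pn: "\<And>i. i < n \<Longrightarrow> p i < n" using p(1) by (meson atLeastLessThan_iff permutes_in_image zero_le)
  have pinj: "\<And>i j. p i = p j \<Longrightarrow> i = j" using p(1) by (metis permutes_inj injD)
  have pS1: "\<And>i. i < m \<Longrightarrow> p i \<in> S1" using p(2) by (auto simp: bij_betw_def)
  have m0: "m > 0" unfolding m_def using S(1,3) finite_subset[OF S(1)] by (simp add: card_gt_0_iff)
  define PL where "PL = mat n n (\<lambda>(i,j). ?L $$ (p i, p j))"
  define L1 where "L1 = mat m m (\<lambda>(i,j). ?L $$ (p i, p j))"
  define g where "g i = p (m + i)" for i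
  define D where "D = mat (n-m) (n-m) (\<lambda>(i,j). ?L $$ (g i, g j))"
  have "char_poly ?L = char_poly PL" unfolding PL_def by (rule cp_perm[symmetric, OF lap_carrier p(1)])
  also have "\<dots> = char_poly (mat m m (\<lambda>(i,j). PL $$ (i,j))) * char_poly (mat (n-m) (n-m) (\<lambda>(i,j). PL $$ (m+i, m+j)))"
  proof (rule cp_block[OF _ p(4)])
    show "PL \<in> carrier_mat n n" by (simp add: PL_def)
    fix i j assume ij: "i < m" "m \<le> j" "j < n"
    show "PL $$ (i,j) = 0" unfolding PL_def using ij p(4) pS1 p(3) pn
      by (auto intro!: lap_zero[of A S1, OF c1])
  qed
  also have "mat m m (\<lambda>(i,j). PL $$ (i,j)) = L1"
    by (rule eq_matI) (use p(4) in \<open>auto simp: PL_def L1_def\<close>)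
  also have "mat (n-m) (n-m) (\<lambda>(i,j). PL $$ (m+i, m+j)) = D"
    by (rule eq_matI) (auto simp: PL_def D_def g_def)
  finally have cpL: "char_poly ?L = char_poly L1 * char_poly D" .
  have r1: "poly (char_poly L1) 0 = 0" unfolding L1_def
    by (rule zero_root_sub[OF s S(1) c1 p(2) m0])
  have gn: "\<And>i. i < n - m \<Longrightarrow> g i < n" unfolding g_def using pn by simp
  have gS1: "\<And>i. i < n - m \<Longrightarrow> g i \<notin> S1" unfolding g_def using p(3) by simp
  define S2' where "S2' = {i. i < n - m \<and> g i \<in> S2}"
  have S2'sub: "S2' \<subseteq> {0..<n-m}" unfolding S2'_def by auto
  have bg: "bij_betw g S2' S2"
  proof (rule bij_betw_imageI)
    show "inj_on g S2'"
    proof (rule inj_onI)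
      fix x y assume "x \<in> S2'" "y \<in> S2'" "g x = g y"
      hence "p (m + x) = p (m + y)" by (simp add: g_def)
      hence "m + x = m + y" by (rule pinj)
      thus "x = y" by simp
    qed
    show "g ` S2' = S2"
    proof
      show "g ` S2' \<subseteq> S2" unfolding S2'_def by auto
      show "S2 \<subseteq> g ` S2'"
      proof
        fix x assume x: "x \<in> S2"
        hence xn: "x < n" "x \<notin> S1" using S by auto
        have "x \<in> p ` {0..<n}" using xn p(1) by (simp add: permutes_image)
        then obtain y where y: "y < n" "x = p y" by auto
        have "\<not> y < m" using pS1 xn y by auto
        hence "x = g (y - m)" "y - m < n - m" using y by (auto simp: g_def)
        thus "x \<in> g ` S2'" using x unfolding S2'_def by auto
      qed
    qed
  qed
  define m2 where "m2 = card S2'"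
  obtain q where q: "q permutes {0..<n-m}" "bij_betw q {0..<m2} S2'"
    "\<And>i. m2 \<le> i \<Longrightarrow> i < n - m \<Longrightarrow> q i \<notin> S2'" "m2 \<le> n - m"
    by (rule perm_for_set[OF S2'sub, folded m2_def]) blast+
  have qn: "\<And>i. i < n - m \<Longrightarrow> q i < n - m" using q(1) by (meson atLeastLessThan_iff permutes_in_image zero_le)
  have qS: "\<And>i. i < m2 \<Longrightarrow> q i \<in> S2'" using q(2) by (auto simp: bij_betw_def)
  have m20: "m2 > 0"
  proof -
    have "card S2' = card S2" using bij_betw_same_card[OF bg] .
    thus ?thesis unfolding m2_def using S(2,4) finite_subset[OF S(2)] by (simp add: card_gt_0_iff)
  qed
  define QD where "QD = mat (n-m) (n-m) (\<lambda>(i,j). D $$ (q i, q j))"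
  define D1 where "D1 = mat m2 m2 (\<lambda>(i,j). ?L $$ ((g \<circ> q) i, (g \<circ> q) j))"
  have "char_poly D = char_poly QD" unfolding QD_def
    by (rule cp_perm[symmetric, OF _ q(1)]) (simp add: D_def)
  also have "\<dots> = char_poly (mat m2 m2 (\<lambda>(i,j). QD $$ (i,j))) * char_poly (mat (n-m-m2) (n-m-m2) (\<lambda>(i,j). QD $$ (m2+i, m2+j)))"
  proof (rule cp_block[OF _ q(4)])
    show "QD \<in> carrier_mat (n-m) (n-m)" by (simp add: QD_def)
    fix i j assume ij: "i < m2" "m2 \<le> j" "j < n - m"
    have qi: "q i < n - m" "g (q i) \<in> S2" using qS[OF ij(1)] unfolding S2'_def by auto
    have qj: "q j < n - m" "g (q j) \<notin> S2" using qn[OF ij(3)] q(3)[OF ij(2,3)] unfolding S2'_def by auto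
    show "QD $$ (i,j) = 0" unfolding QD_def D_def using ij q(4) qi qj gn
      by (auto intro!: lap_zero[of A S2, OF c2])
  qed
  also have "mat m2 m2 (\<lambda>(i,j). QD $$ (i,j)) = D1"
    by (rule eq_matI) (use q(4) qn in \<open>auto simp: QD_def D1_def D_def\<close>)
  finally have cpD: "char_poly D = char_poly D1 * char_poly (mat (n-m-m2) (n-m-m2) (\<lambda>(i,j). QD $$ (m2+i, m2+j)))" .
  have r2: "poly (char_poly D1) 0 = 0" unfolding D1_def
    by (rule zero_root_sub[OF s S(2) c2 bij_betw_trans[OF q(2) bg] m20])
  have d1: "[:0,1:] dvd char_poly L1" using r1 poly_eq_0_iff_dvd[of "char_poly L1" 0] by simp
  have d2: "[:0,1:] dvd char_poly D1" using r2 poly_eq_0_iff_dvd[of "char_poly D1" 0] by simp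
  have "[:0,1:] * [:0,1:] dvd char_poly L1 * char_poly D1" using d1 d2 by (rule mult_dvd_mono)
  hence "[:0,1:] * [:0,1:] dvd char_poly L1 * char_poly D1 * char_poly (mat (n-m-m2) (n-m-m2) (\<lambda>(i,j). QD $$ (m2+i, m2+j)))"
    by (rule dvd_mult2)
  thus ?thesis unfolding cpL cpD by (simp only: mult.assoc)
qed


lemma tree_indeg:
  assumes s: "simple_digraph n A" and r: "is_root n A r" and c: "card A = n - 1"
  shows "in_degree A r = 0" "\<And>v. v < n \<Longrightarrow> v \<noteq> r \<Longrightarrow> in_degree A v = 1"
proof -
  have rn: "r < n" using r by (simp add: is_root_def)
  have ge1: "in_degree A v \<ge> 1" if v: "v < n" "v \<noteq> r" for v
  proof -
    have "(r,v) \<in> A\<^sup>*" using r v by (simp add: is_root_def)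
    then obtain u where "(u,v) \<in> A" using v(2) by (auto elim: rtranclE)
    hence "{j. (j,v) \<in> A} \<noteq> {}" by auto
    thus ?thesis using innb_fin[OF s, of v] by (simp add: in_degree_def Suc_le_eq card_gt_0_iff)
  qed
  let ?R = "{..<n} - {r}"
  have cR: "card ?R = n - 1" using rn by simp
  have tot: "in_degree A r + (\<Sum>v\<in>?R. in_degree A v) = n - 1"
    using sum_indeg[OF s] c rn by (simp add: sum.remove[of "{..<n}" r])
  have lb: "(\<Sum>v\<in>?R. 1) \<le> (\<Sum>v\<in>?R. in_degree A v)"
    by (rule sum_mono) (use ge1 in auto)
  hence lb': "n - 1 \<le> (\<Sum>v\<in>?R. in_degree A v)" using cR by simp
  show "in_degree A r = 0" using tot lb' by linarith
  fix v assume v: "v < n" "v \<noteq> r"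
  show "in_degree A v = 1"
  proof (rule ccontr)
    assume "in_degree A v \<noteq> 1"
    hence "1 < in_degree A v" using ge1[OF v] by simp
    hence "(\<Sum>v\<in>?R. 1) < (\<Sum>v\<in>?R. in_degree A v)"
      by (intro sum_strict_mono_ex1) (use ge1 v in auto)
    thus False using tot cR by simp
  qed
qed

lemma tree_eig:
  assumes s: "simple_digraph n A" and r: "is_root n A r" and c: "card A = n - 1"
    and l: "poly (char_poly (laplacian n A)) l = 0"
  shows "l = 0 \<or> l = 1"
proof (rule ccontr)
  assume nl: "\<not> (l = 0 \<or> l = 1)"
  let ?L = "laplacian n A"
  have "eigenvalue ?L l" using eigenvalue_root_char_poly[OF lap_carrier] l by auto
  then obtain v where v: "v \<in> carrier_vec n" "v \<noteq> 0\<^sub>v n" "?L *\<^sub>v v = l \<cdot>\<^sub>v v"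
    unfolding eigenvalue_def eigenvector_def by auto
  have rn: "r < n" using r by (simp add: is_root_def)
  have row: "l * v $ i = of_nat (in_degree A i) * v $ i - (\<Sum>j\<in>{j. (j,i) \<in> A}. v $ j)" if i: "i < n" for i
  proof -
    have "(?L *\<^sub>v v) $ i = (l \<cdot>\<^sub>v v) $ i" using v(3) by simp
    also have "\<dots> = l * v $ i" using i v(1) by simp
    finally show ?thesis using lap_mulv[OF s i v(1)] by simp
  qed
  have N0: "{j. (j,r) \<in> A} = {}"
    using tree_indeg(1)[OF s r c] innb_fin[OF s, of r] by (simp add: in_degree_def)
  have vr: "v $ r = 0" using row[OF rn] N0 tree_indeg(1)[OF s r c] nl by simp
  have "v $ w = 0" if w: "(r,w) \<in> A\<^sup>*" for w
    using w
  proof (induction rule: rtrancl_induct)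
    case base thus ?case by (rule vr)
  next
    case (step y z)
    have zn: "z < n" using step(2) s by (auto simp: simple_digraph_def)
    show ?case
    proof (cases "z = r")
      case True thus ?thesis using vr by simp
    next
      case False
      have d1: "in_degree A z = 1" using tree_indeg(2)[OF s r c zn False] .
      have "{j. (j,z) \<in> A} = {y}"
      proof -
        have "card {j. (j,z) \<in> A} = 1" using d1 by (simp add: in_degree_def)
        then obtain x where "{j. (j,z) \<in> A} = {x}" by (rule card_1_singletonE)
        moreover have "y \<in> {j. (j,z) \<in> A}" using step(2) by simp
        ultimately show ?thesis by auto
      qed
      hence "l * v $ z = v $ z - v $ y" using row[OF zn] d1 by simp
      hence "(1 - l) * v $ z = 0" using step(3) by (simp add: algebra_simps)
      thus ?thesis using nl by simp
    qed
  qed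
  hence "v = 0\<^sub>v n" using v(1) r by (intro eq_vecI) (auto simp: is_root_def)
  thus False using v(2) by simp
qed


lemma Re_sum_list: "sum_list (map Re xs) = Re (sum_list xs)"
  by (induction xs) auto

lemma count_Re: "count (mset xs) 0 \<le> count (mset (map Re xs)) 0"
  by (induction xs) auto

lemma tree_conn:
  assumes n: "n \<ge> 2" and s: "simple_digraph n A" and c: "card A = n - 1" and r: "rooted n A"
  shows "alg_conn n A = 1"
proof -
  obtain rt where rt: "is_root n A rt" using r by (auto simp: rooted_def)
  obtain es where es: "char_poly (laplacian n A) = (\<Prod>e\<leftarrow>es. [:- e, 1:])" "length es = n"
    "sum_list es = of_nat (card A)" "alg_conn n A = sort (map Re es) ! 1"
    "\<forall>e\<in>set es. Re e \<ge> 0" "mset es = proots (char_poly (laplacian n A))"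
    by (rule alg_conn_repr[OF s]) blast+
  have "\<forall>x\<in>set (map Re es). x = 0 \<or> x = 1"
  proof
    fix x assume "x \<in> set (map Re es)"
    then obtain e where e: "e \<in> set es" "x = Re e" by auto
    have "poly (char_poly (laplacian n A)) e = 0"
      unfolding es(1) poly_prod_list using e by (simp add: prod_list_zero_iff)
    hence "e = 0 \<or> e = 1" by (rule tree_eig[OF s rt c])
    thus "x = 0 \<or> x = 1" using e by auto
  qed
  moreover have "sum_list (map Re es) = real n - 1"
    using es(3) c n by (simp add: Re_sum_list of_nat_diff)
  ultimately have "sort (map Re es) ! 1 = 1" using es(2) n by (intro list_eq1) auto
  thus ?thesis using es(4) by simp
qed

lemma path_tree:
  assumes n: "n \<ge> 2"
  shows "simple_digraph n {(i, Suc i) | i. Suc i < n} \<and> card {(i, Suc i) | i. Suc i < n} = n - 1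
    \<and> rooted n {(i, Suc i) | i. Suc i < n}"
proof -
  let ?P = "{(i, Suc i) | i. Suc i < n}"
  have sd: "simple_digraph n ?P" by (auto simp: simple_digraph_def)
  have "?P = (\<lambda>i. (i, Suc i)) ` {..<n-1}" by auto
  moreover have "inj_on (\<lambda>i. (i, Suc i)) {..<n-1}" by (auto simp: inj_on_def)
  ultimately have cd: "card ?P = n - 1" by (simp add: card_image)
  have "(0, v) \<in> ?P\<^sup>*" if "v < n" for v
    using that
  proof (induction v)
    case 0 thus ?case by simp
  next
    case (Suc v)
    hence "(0, v) \<in> ?P\<^sup>*" by simp
    moreover have "(v, Suc v) \<in> ?P" using Suc by auto
    ultimately show ?case by (rule rtrancl_into_rtrancl)
  qed
  hence "is_root n ?P 0" using n by (simp add: is_root_def)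
  thus ?thesis using sd cd by (auto simp: rooted_def)
qed

theorem theorem1:
  fixes n :: nat
  assumes "n \<ge> 2"
  shows "(\<forall>A. simple_digraph n A \<and> card A = n - 1 \<longrightarrow> alg_conn n A \<le> 1)
    \<and> (\<exists>A. simple_digraph n A \<and> card A = n - 1 \<and> alg_conn n A = 1)
    \<and> (\<forall>A. simple_digraph n A \<and> card A = n - 1 \<longrightarrow> (alg_conn n A = 1 \<longleftrightarrow> directed_tree n A))"
proof (intro conjI allI impI)
  fix A assume sc: "simple_digraph n A \<and> card A = n - 1"
  hence s: "simple_digraph n A" and c: "card A = n - 1" by auto
  obtain es where es: "char_poly (laplacian n A) = (\<Prod>e\<leftarrow>es. [:- e, 1:])" "length es = n"
    "sum_list es = of_nat (card A)" "alg_conn n A = sort (map Re es) ! 1"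
    "\<forall>e\<in>set es. Re e \<ge> 0" "mset es = proots (char_poly (laplacian n A))"
    by (rule alg_conn_repr[OF s]) blast+
  have sm: "sum_list (map Re es) = real n - 1"
    using es(3) c assms by (simp add: Re_sum_list of_nat_diff)
  show "alg_conn n A \<le> 1" unfolding es(4)
    by (rule list_le1[of _ n]) (use es(2,5) sm assms in auto)
next
  show "\<exists>A. simple_digraph n A \<and> card A = n - 1 \<and> alg_conn n A = 1"
    using path_tree[OF assms] tree_conn[OF assms] by blast
next
  fix A assume sc: "simple_digraph n A \<and> card A = n - 1"
  hence s: "simple_digraph n A" and c: "card A = n - 1" by auto
  show "alg_conn n A = 1 \<longleftrightarrow> directed_tree n A"
  proof
    assume "directed_tree n A"
    thus "alg_conn n A = 1" using tree_conn[OF assms s c] by (simp add: directed_tree_def)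
  next
    assume a1: "alg_conn n A = 1"
    show "directed_tree n A"
    proof (rule ccontr)
      assume "\<not> directed_tree n A"
      hence nr: "\<not> rooted n A" using s c by (simp add: directed_tree_def)
      obtain es where es: "char_poly (laplacian n A) = (\<Prod>e\<leftarrow>es. [:- e, 1:])" "length es = n"
        "sum_list es = of_nat (card A)" "alg_conn n A = sort (map Re es) ! 1"
        "\<forall>e\<in>set es. Re e \<ge> 0" "mset es = proots (char_poly (laplacian n A))"
        by (rule alg_conn_repr[OF s]) blast+
      let ?p = "char_poly (laplacian n A)"
      have d: "[:0,1:] * [:0,1:] dvd ?p" using nonrooted_double[OF s _ nr] assms by simp
      have p0: "?p \<noteq> 0" unfolding es(1) by (auto simp: prod_list_zero_iff)
      have "[:- 0, 1:] ^ 2 dvd ?p" using d by (simp add: power2_eq_square)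
      hence "2 \<le> Polynomial.order 0 ?p" using p0 order_divides by blast
      hence "2 \<le> count (mset es) 0" using es(6) p0 by simp
      hence "2 \<le> count (mset (map Re es)) 0" using count_Re[of es] by linarith
      hence "sort (map Re es) ! 1 = 0" by (intro list_zero2) (use es(5) in auto)
      thus False using a1 es(4) by simp
    qed
  qed
qed

end
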